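(* Let $n\geq 1$ and let $a_1,\ldots,a_n$ be nonzero integers such that $a_i$ is even for every even index $i$. Suppose the continued fraction \[[a_1,\ldots,a_n]=a_1+\cfrac{1}{a_2+\cfrac{1}{\cdots+\cfrac{1}{a_n}}}\] is well defined (no division by zero occurs) and equals $p/q$, where $p,q$ are coprime integers with $q\neq 0$. Then $n$ is even if and only if $q$ is even.
   Context: Such a continued fraction $[a_1,\ldots,a_n]$ (nonzero integer entries, with all entries in even positions even) is called a semi-even expansion of the rational number it represents. *)

theory Defs
  imports Main "HOL.Rat"
begin

fun cfrac :: "int list \<Rightarrow> rat option" where
  "cfrac [] = None"
| "cfrac [a] = Some (of_int a)"
| "cfrac (a # b # rest) =
     (case cfrac (b # rest) of
        None \<Rightarrow> None
      | Some x \<Rightarrow> (if x = 0 then None else Some (of_int a + 1 / x)))"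

end

theory Submission
  imports Defs
begin

fun pq :: "int list \<Rightarrow> int \<times> int" where
  "pq [] = (0, 1)"
| "pq [a] = (a, 1)"
| "pq (a # b # rest) = (a * fst (pq (b # rest)) + snd (pq (b # rest)), fst (pq (b # rest)))"

lemma pq_val:
  "cfrac L = Some x \<Longrightarrow> x = of_int (fst (pq L)) / of_int (snd (pq L)) \<and> snd (pq L) \<noteq> 0
    \<and> coprime (fst (pq L)) (snd (pq L))"
proof (induction L arbitrary: x rule: pq.induct)
  case 1
  then show ?case by simp
next
  case (2 a)
  then show ?case by simp
next
  case (3 a b rest)
  from "3.prems" obtain y where y: "cfrac (b # rest) = Some y" "y \<noteq> 0"
    and x: "x = of_int a + 1 / y"
    by (auto split: option.splits if_splits)
  define P where "P = fst (pq (b # rest))"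
  define Q where "Q = snd (pq (b # rest))"
  from "3.IH"[OF y(1)] have h: "y = of_int P / of_int Q" "Q \<noteq> 0" "coprime P Q"
    unfolding P_def Q_def by auto
  have P0: "P \<noteq> 0" using h y(2) by auto
  have "x = of_int (a * P + Q) / of_int P"
    using x h P0 by (simp add: field_simps)
  moreover have "coprime (a * P + Q) P"
  proof -
    have "gcd P (a * P + Q) = gcd P Q" by (simp add: gcd_add_mult)
    then show ?thesis using h(3) by (metis coprime_iff_gcd_eq_1 gcd.commute)
  qed
  ultimately show ?case using P0 by (simp add: P_def Q_def)
qed

lemma pq_parity:
  "(\<forall>i < length L. odd i \<longrightarrow> even (L ! i)) \<Longrightarrow> L \<noteq> [] \<Longrightarrow>
    even (snd (pq L)) \<longleftrightarrow> even (length L)"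
proof (induction L rule: induct_list012)
  case 1
  then show ?case by simp
next
  case (2 a)
  then show ?case by simp
next
  case (3 a b rest)
  have eb: "even b" using "3.prems"(1) by (metis One_nat_def length_Cons less_Suc_eq_0_disj nth_Cons_Suc nth_Cons_0 odd_one zero_less_Suc)
  show ?case
  proof (cases rest)
    case Nil
    then show ?thesis using eb by simp
  next
    case (Cons c r)
    have se: "\<forall>i < length rest. odd i \<longrightarrow> even (rest ! i)"
    proof (intro allI impI)
      fix i assume "i < length rest" "odd i"
      then show "even (rest ! i)" using "3.prems"(1)[rule_format, of "Suc (Suc i)"] by simp
    qed
    have "snd (pq (a # b # rest)) = b * fst (pq rest) + snd (pq rest)"
      using Cons by simp
    then have "even (snd (pq (a # b # rest))) \<longleftrightarrow> even (snd (pq rest))"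
      using eb by simp
    also have "\<dots> \<longleftrightarrow> even (length rest)" using "3.IH"(1)[OF se] Cons by simp
    finally show ?thesis by simp
  qed
qed

theorem proposition4:
  fixes as :: "int list" and p q :: int
  assumes "length as \<ge> 1"
    and "\<forall>i < length as. as ! i \<noteq> 0"
    and "\<forall>i < length as. even (i + 1) \<longrightarrow> even (as ! i)"
    and "cfrac as = Some (of_int p / of_int q)"
    and "coprime p q"
    and "q \<noteq> 0"
  shows "even (length as) \<longleftrightarrow> even q"
proof -
  define P where "P = fst (pq as)"
  define Q where "Q = snd (pq as)"
  from pq_val[OF assms(4)] have h: "of_int p / of_int q = (of_int P / of_int Q :: rat)" "Q \<noteq> 0" "coprime P Q"
    unfolding P_def Q_def by auto
  have eq: "p * Q = P * q"
  proof -
    have "(of_int p :: rat) * of_int Q = of_int P * of_int q"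
      using h(1,2) assms(6) by (simp add: field_simps)
    then show ?thesis by (metis of_int_eq_iff of_int_mult)
  qed
  have "q dvd Q"
  proof -
    have "q dvd p * Q" using eq by simp
    then show ?thesis using assms(5) by (metis coprime_commute coprime_dvd_mult_right_iff)
  qed
  moreover have "Q dvd q"
  proof -
    have "Q dvd P * q" using eq by (metis dvd_triv_right)
    then show ?thesis using h(3) by (metis coprime_commute coprime_dvd_mult_right_iff)
  qed
  ultimately have "even q \<longleftrightarrow> even Q" by (meson dvd_trans)
  moreover have "even Q \<longleftrightarrow> even (length as)"
    unfolding Q_def
    using pq_parity[of as] assms(1,3) by (auto simp: Suc_le_eq)
  ultimately show ?thesis by simp
qed

end
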